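(* Suppose $F$ is symmetric ($F(-i)=1-F(i)$ for all $i$) and fix $R\in(0,1)$. (i) If the receiver obtains only buy recommendations (resp. only don't-buy recommendations), then as their number tends to infinity the posterior probability of $(1,1)$ (resp. $(0,0)$) converges to $1$: $\lim_{b\to\infty}p_H(b,0)=1$ and $\lim_{d\to\infty}p_L(0,d)=1$. (ii) If the receiver obtains mixed recommendations, then for all $b,d>0$, $p_1(b,d)/p_2(b,d)=q_1/q_2$ and $p_H(b,d)=p_L(b,d)=0$.
   Context: Setting. Consumer types are $i\in[-1/2,1/2]$, distributed according to a continuous cumulative distribution function $F$ with full support on $[-1/2,1/2]$. A product has a quality vector $(Q_1,Q_2)\in\{0,1\}^2$; a type-$i$ consumer gets payoff $(1/2+i)Q_1+(1/2-i)Q_2$. The versions $(1,1),(1,0),(0,1),(0,0)$ have prior probabilities $q_H,q_1,q_2,q_L$, all strictly positive and summing to $1$. Given a threshold $R\in(0,1)$, each sender, with type drawn from $F$ independently of the product and of the other senders, gives a buy recommendation if her payoff from the product is at least $R$ and a don't-buy recommendation otherwise. Let $\phi_1(R)=1-F(R-1/2)$, $\phi_2(R)=F(1/2-R)$. After observing $b$ buy and $d$ don't-buy recommendations ($b+d>0$), the receiver's Bayesian posterior $(p_H(b,d),p_1(b,d),p_2(b,d),p_L(b,d))$ over $(1,1),(1,0),(0,1),(0,0)$ is proportional to $(q_H\mathbf 1[d=0],\ q_1\phi_1(R)^b(1-\phi_1(R))^d,\ q_2\phi_2(R)^b(1-\phi_2(R))^d,\ q_L\mathbf 1[b=0])$.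 *)

theory Defs
  imports Complex_Main
begin

definition cont_cdf_full_support :: "(real \<Rightarrow> real) \<Rightarrow> bool" where
  "cont_cdf_full_support F \<longleftrightarrow>
     continuous_on UNIV F \<and>
     (\<forall>x. x \<le> -1/2 \<longrightarrow> F x = 0) \<and>
     (\<forall>x. x \<ge> 1/2 \<longrightarrow> F x = 1) \<and>
     mono F \<and>
     strict_mono_on {-1/2..1/2} F"

definition phi1 :: "(real \<Rightarrow> real) \<Rightarrow> real \<Rightarrow> real" where
  "phi1 F R = 1 - F (R - 1/2)"

definition phi2 :: "(real \<Rightarrow> real) \<Rightarrow> real \<Rightarrow> real" where
  "phi2 F R = F (1/2 - R)"

text \<open>Unnormalized posterior weights of versions (1,1),(1,0),(0,1),(0,0).\<close>
definition wH :: "real \<Rightarrow> nat \<Rightarrow> nat \<Rightarrow> real" where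
  "wH qH b d = (if d = 0 then qH else 0)"
definition w1 :: "(real \<Rightarrow> real) \<Rightarrow> real \<Rightarrow> real \<Rightarrow> nat \<Rightarrow> nat \<Rightarrow> real" where
  "w1 F R q1 b d = q1 * phi1 F R ^ b * (1 - phi1 F R) ^ d"
definition w2 :: "(real \<Rightarrow> real) \<Rightarrow> real \<Rightarrow> real \<Rightarrow> nat \<Rightarrow> nat \<Rightarrow> real" where
  "w2 F R q2 b d = q2 * phi2 F R ^ b * (1 - phi2 F R) ^ d"
definition wL :: "real \<Rightarrow> nat \<Rightarrow> nat \<Rightarrow> real" where
  "wL qL b d = (if b = 0 then qL else 0)"

definition wtot :: "(real \<Rightarrow> real) \<Rightarrow> real \<Rightarrow> real \<Rightarrow> real \<Rightarrow> real \<Rightarrow> real \<Rightarrow> nat \<Rightarrow> nat \<Rightarrow> real" where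
  "wtot F R qH q1 q2 qL b d = wH qH b d + w1 F R q1 b d + w2 F R q2 b d + wL qL b d"

definition pH where "pH F R qH q1 q2 qL b d = wH qH b d / wtot F R qH q1 q2 qL b d"
definition p1 where "p1 F R qH q1 q2 qL b d = w1 F R q1 b d / wtot F R qH q1 q2 qL b d"
definition p2 where "p2 F R qH q1 q2 qL b d = w2 F R q2 b d / wtot F R qH q1 q2 qL b d"
definition pL where "pL F R qH q1 q2 qL b d = wL qL b d / wtot F R qH q1 q2 qL b d"

end

theory Submission
  imports Defs
begin

theorem lemma3:
  fixes F :: "real \<Rightarrow> real" and R qH q1 q2 qL :: real
  assumes cdf: "cont_cdf_full_support F"
    and sym: "\<And>i. F (- i) = 1 - F i"
    and R: "0 < R" "R < 1"
    and q_pos: "qH > 0" "q1 > 0" "q2 > 0" "qL > 0"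
    and q_sum: "qH + q1 + q2 + qL = 1"
  shows "((\<lambda>b. pH F R qH q1 q2 qL b 0) \<longlonglongrightarrow> 1)
    \<and> ((\<lambda>d. pL F R qH q1 q2 qL 0 d) \<longlonglongrightarrow> 1)
    \<and> (\<forall>b d. b > 0 \<and> d > 0 \<longrightarrow>
           p1 F R qH q1 q2 qL b d / p2 F R qH q1 q2 qL b d = q1 / q2
         \<and> pH F R qH q1 q2 qL b d = 0 \<and> pL F R qH q1 q2 qL b d = 0)"
proof -
  define p where "p = F (1/2 - R)"
  have e1: "phi1 F R = p" unfolding phi1_def p_def using sym[of "R - 1/2"] by simp
  have e2: "phi2 F R = p" unfolding phi2_def p_def by simp
  have sm: "strict_mono_on {-1/2..1/2} F" and z: "F (-1/2) = 0" and o: "F (1/2) = 1"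
    using cdf unfolding cont_cdf_full_support_def by auto
  have p0: "p > 0"
    using strict_mono_onD[OF sm, of "-1/2" "1/2 - R"] R z unfolding p_def by auto
  have p1': "p < 1"
    using strict_mono_onD[OF sm, of "1/2 - R" "1/2"] R o unfolding p_def by auto
  have A: "(\<lambda>b. pH F R qH q1 q2 qL b 0) \<longlonglongrightarrow> 1"
  proof -
    have eq: "(\<lambda>b. pH F R qH q1 q2 qL (Suc b) 0) = (\<lambda>b::nat. qH / (qH + (q1 + q2) * p ^ Suc b))"
      by (rule ext) (auto simp: pH_def wtot_def wH_def w1_def w2_def wL_def e1 e2 algebra_simps)
    have "(\<lambda>b::nat. p ^ Suc b) \<longlonglongrightarrow> 0" using p0 p1' by (intro LIMSEQ_Suc LIMSEQ_power_zero) auto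
    hence "(\<lambda>b::nat. qH / (qH + (q1 + q2) * p ^ Suc b)) \<longlonglongrightarrow> qH / (qH + (q1 + q2) * 0)"
      using q_pos by (intro tendsto_intros) auto
    thus ?thesis using eq q_pos by (subst filterlim_sequentially_Suc[symmetric]) simp
  qed
  have B: "(\<lambda>d. pL F R qH q1 q2 qL 0 d) \<longlonglongrightarrow> 1"
  proof -
    have eq: "(\<lambda>d. pL F R qH q1 q2 qL 0 (Suc d)) = (\<lambda>d::nat. qL / (qL + (q1 + q2) * (1 - p) ^ Suc d))"
      by (rule ext) (auto simp: pL_def wtot_def wH_def w1_def w2_def wL_def e1 e2 algebra_simps)
    have "(\<lambda>d::nat. (1 - p) ^ Suc d) \<longlonglongrightarrow> 0" using p0 p1' by (intro LIMSEQ_Suc LIMSEQ_power_zero) auto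
    hence "(\<lambda>d::nat. qL / (qL + (q1 + q2) * (1 - p) ^ Suc d)) \<longlonglongrightarrow> qL / (qL + (q1 + q2) * 0)"
      using q_pos by (intro tendsto_intros) auto
    thus ?thesis using eq q_pos by (subst filterlim_sequentially_Suc[symmetric]) simp
  qed
  have C: "p1 F R qH q1 q2 qL b d / p2 F R qH q1 q2 qL b d = q1 / q2
         \<and> pH F R qH q1 q2 qL b d = 0 \<and> pL F R qH q1 q2 qL b d = 0"
    if "b > 0" "d > 0" for b d
  proof -
    have pp: "p ^ b * (1 - p) ^ d > 0" using p0 p1' by simp
    have wt: "wtot F R qH q1 q2 qL b d = (q1 + q2) * (p ^ b * (1 - p) ^ d)"
      using that by (simp add: wtot_def wH_def w1_def w2_def wL_def e1 e2 algebra_simps)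
    have "wtot F R qH q1 q2 qL b d > 0" using wt pp q_pos by simp
    then show ?thesis using that pp q_pos p0 p1'
      by (simp add: p1_def p2_def pH_def pL_def wH_def wL_def w1_def w2_def e1 e2 field_simps)
  qed
  show ?thesis using A B C by blast
qed

end
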